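(* Let $\mathbb{C}^{1,n+1}$ be a complex vector space with basis $p_1,e_1,\dots,e_n,q_1$ and pseudo-Hermitian metric $g$ of signature $(1,n+1)$ with $g(p_1,q_1)=1$, $g(e_i,e_j)=\delta_{ij}$ and all other values on basis vectors zero. Let $\tilde E=\mathrm{span}_{\mathbb{C}}\{e_1,\dots,e_n\}$, and let $U(1,n+1)_{\mathbb{C}p_1}$ be the group of $g$-preserving complex linear automorphisms of $\mathbb{C}^{1,n+1}$ preserving the line $\mathbb{C}p_1$. For every $f\in U(1,n+1)_{\mathbb{C}p_1}$ let $\phi_f:\tilde E\to\tilde E$ be the map defined by $w(f(\ell))=\phi_f(w(\ell))$ for every isotropic complex line $\ell\neq\mathbb{C}p_1$ (see context). Let $G\subset U(1,n+1)_{\mathbb{C}p_1}$ be a subgroup that acts weakly irreducibly on $\mathbb{C}^{1,n+1}$, and let $F=\{\phi_f: f\in G\}$. Then: (1) $F$ does not preserve any proper complex affine subspace of $\tilde E$; (2) if $F$ preserves a proper affine subspace $L\subset\tilde E$ that is not complex, then the minimal complex affine subspace of $\tilde E$ containing $L$ is $\tilde E$.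
   Context: Every isotropic complex line $\ell\neq\mathbb{C}p_1$ contains a unique vector of the form $tp_1+w+q_1$ with $t\in\mathbb{C}$, $w\in\tilde E$; set $w(\ell)=w$. Every $w\in\tilde E$ arises this way. Each $f\in U(1,n+1)_{\mathbb{C}p_1}$ maps isotropic lines to isotropic lines and fixes $\mathbb{C}p_1$, and $w(f(\ell))$ depends only on $w(\ell)$, so $\phi_f$ is well defined; it is a similarity transformation of the Hermitian space $\tilde E$ (of the form $w\mapsto\mu Aw+b$ with $\mu\in\mathbb{C}^*$, $A$ unitary, $b\in\tilde E$). (This is the composition of the paper's homomorphism $\Gamma$ to the Heisenberg similarity group with the projection $\pi$ to $\mathrm{Sim}\,\tilde E$.) $G$ acts weakly irreducibly on $\mathbb{C}^{1,n+1}$ if it preserves no proper nonzero complex subspace on which $g$ is nondegenerate. An affine subspace of $\tilde E$ (viewed as real affine space) is called complex if its underlying real vector subspace is invariant under multiplication by $i$. *)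

theory Defs
  imports "HOL-Analysis.Analysis"
begin

text \<open>The space C^{1,n+1}: a vector t p1 + w + s q1 is represented by the triple (t, w, s),
  where w \<in> E~ = complex^'n (coordinates w.r.t. e_1..e_n).\<close>

type_synonym 'n amb = "complex \<times> (complex ^ 'n) \<times> complex"

definition csmul :: "complex \<Rightarrow> 'n::finite amb \<Rightarrow> 'n::finite amb" where
  "csmul c x = (c * fst x, c *s fst (snd x), c * snd (snd x))"

definition gmet :: "'n::finite amb \<Rightarrow> 'n::finite amb \<Rightarrow> complex" where
  "gmet x y = fst x * cnj (snd (snd y)) + snd (snd x) * cnj (fst y)
             + (\<Sum>i\<in>UNIV. fst (snd x) $ i * cnj (fst (snd y) $ i))"

definition p1 :: "'n::finite amb" where "p1 = (1, 0, 0)"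

definition cline :: "'n::finite amb \<Rightarrow> 'n::finite amb set" where
  "cline v = range (\<lambda>c. csmul c v)"

definition clinear_map :: "('n::finite amb \<Rightarrow> 'n::finite amb) \<Rightarrow> bool" where
  "clinear_map f \<longleftrightarrow> (\<forall>x y. f (x + y) = f x + f y) \<and> (\<forall>c x. f (csmul c x) = csmul c (f x))"

definition U_p1 :: "('n::finite amb \<Rightarrow> 'n::finite amb) set" where
  "U_p1 = {f. clinear_map f \<and> bij f \<and> (\<forall>x y. gmet (f x) (f y) = gmet x y)
              \<and> f ` cline p1 = cline p1}"

definition is_subgroup_U :: "('n::finite amb \<Rightarrow> 'n::finite amb) set \<Rightarrow> bool" where
  "is_subgroup_U G \<longleftrightarrow> G \<subseteq> U_p1 \<and> id \<in> G \<and> (\<forall>f\<in>G. \<forall>h\<in>G. f \<circ> h \<in> G)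
     \<and> (\<forall>f\<in>G. inv f \<in> G)"

definition csubspace_amb :: "'n::finite amb set \<Rightarrow> bool" where
  "csubspace_amb V \<longleftrightarrow> 0 \<in> V \<and> (\<forall>x\<in>V. \<forall>y\<in>V. x + y \<in> V) \<and> (\<forall>c. \<forall>x\<in>V. csmul c x \<in> V)"

definition nondeg_on :: "'n::finite amb set \<Rightarrow> bool" where
  "nondeg_on V \<longleftrightarrow> (\<forall>x\<in>V. (\<forall>y\<in>V. gmet x y = 0) \<longrightarrow> x = 0)"

definition weakly_irreducible :: "('n::finite amb \<Rightarrow> 'n::finite amb) set \<Rightarrow> bool" where
  "weakly_irreducible G \<longleftrightarrow>
     \<not> (\<exists>V. csubspace_amb V \<and> V \<noteq> {0} \<and> V \<noteq> UNIV \<and> nondeg_on V \<and> (\<forall>f\<in>G. f ` V = V))"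

definition iso_line :: "'n::finite amb set \<Rightarrow> bool" where
  "iso_line l \<longleftrightarrow> (\<exists>v. v \<noteq> 0 \<and> gmet v v = 0 \<and> l = cline v)"

definition wl :: "'n::finite amb set \<Rightarrow> complex ^ 'n::finite" where
  "wl l = (THE w. \<exists>t. (t, w, 1) \<in> l)"

definition phi :: "('n::finite amb \<Rightarrow> 'n::finite amb) \<Rightarrow> complex ^ 'n::finite \<Rightarrow> complex ^ 'n::finite" where
  "phi f w = (THE w'. \<forall>l. iso_line l \<and> l \<noteq> cline p1 \<and> wl l = w \<longrightarrow> wl (f ` l) = w')"

text \<open>Nonempty (real) affine subspace of E~ whose direction space is invariant under i.\<close>
definition complex_affine :: "(complex ^ 'n::finite) set \<Rightarrow> bool" where
  "complex_affine L \<longleftrightarrow> affine L \<and> L \<noteq> {} \<and> (\<forall>x\<in>L. \<forall>y\<in>L. x + \<i> *s (y - x) \<in> L)"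

definition complex_affine_hull :: "(complex ^ 'n::finite) set \<Rightarrow> (complex ^ 'n::finite) set" where
  "complex_affine_hull L = \<Inter> {M. complex_affine M \<and> L \<subseteq> M}"

end

theory Submission
  imports Defs
begin

definition iv :: "complex ^ 'n::finite \<Rightarrow> 'n amb" where
  "iv w = (- (\<Sum>i\<in>UNIV. w$i * cnj (w$i)) / 2, w, 1)"

lemma iv_w [simp]: "fst (snd (iv w)) = w" and iv_s [simp]: "snd (snd (iv w)) = 1"
  by (simp_all add: iv_def)

lemma clin_add: "clinear_map f \<Longrightarrow> f (x + y) = f x + f y"
  unfolding clinear_map_def by blast

lemma clin_smul: "clinear_map f \<Longrightarrow> f (csmul c x) = csmul c (f x)"
  unfolding clinear_map_def by blast

lemma clin_zero: "clinear_map f \<Longrightarrow> f 0 = 0"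
  using clin_add[of f 0 0] by simp

lemma normsum_zero:
  fixes w :: "complex ^ 'n::finite"
  assumes "(\<Sum>i\<in>UNIV. w$i * cnj (w$i)) = 0"
  shows "w = 0"
proof -
  have "(\<Sum>i\<in>UNIV. w$i * cnj (w$i)) = complex_of_real (\<Sum>i\<in>UNIV. (Re (w$i))\<^sup>2 + (Im (w$i))\<^sup>2)"
    by (simp add: complex_mult_cnj)
  then have "complex_of_real (\<Sum>i\<in>UNIV. (Re (w$i))\<^sup>2 + (Im (w$i))\<^sup>2) = 0" using assms by metis
  then have "(\<Sum>i\<in>UNIV. (Re (w$i))\<^sup>2 + (Im (w$i))\<^sup>2) = 0" by (simp only: of_real_eq_0_iff)
  then have "\<forall>i\<in>UNIV. (Re (w$i))\<^sup>2 + (Im (w$i))\<^sup>2 = 0"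
    by (subst sum_nonneg_eq_0_iff[symmetric]) auto
  then show ?thesis
    by (auto simp: vec_eq_iff complex_eq_iff)
qed

lemma normsum_real:
  fixes w :: "complex ^ 'n::finite"
  shows "cnj (\<Sum>i\<in>UNIV. w$i * cnj (w$i)) = (\<Sum>i\<in>UNIV. w$i * cnj (w$i))"
  by (simp add: mult.commute)

lemma iv_iso: "gmet (iv w) (iv w) = 0"
proof -
  have "cnj (\<Sum>i\<in>UNIV. w$i * cnj (w$i)) = (\<Sum>i\<in>UNIV. w$i * cnj (w$i))" by (rule normsum_real)
  then show ?thesis unfolding gmet_def iv_def by (simp add: field_simps)
qed

lemma Up1_p1:
  fixes f :: "'n::finite amb \<Rightarrow> 'n amb"
  assumes "f \<in> U_p1"
  obtains a where "a \<noteq> 0" "f p1 = (a, 0, 0)"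
proof -
  have cl: "clinear_map f" "bij f" "f ` cline p1 = cline p1" using assms unfolding U_p1_def by auto
  have "p1 \<in> cline p1" unfolding cline_def by (rule range_eqI[where x=1]) (simp add: csmul_def p1_def)
  then have "f p1 \<in> cline p1" using cl(3) by blast
  then obtain a where a: "f p1 = (a, 0, 0)" unfolding cline_def by (auto simp: csmul_def p1_def)
  have "a \<noteq> 0"
  proof
    assume "a = 0"
    then have "f p1 = f 0" using a clin_zero[OF cl(1)] by (simp add: prod_eq_iff)
    then have "(p1::'n amb) = 0" using cl(2) by (meson bij_def injD)
    then show False unfolding p1_def by (simp add: prod_eq_iff)
  qed
  then show ?thesis using a that by blast
qed

lemma Up1_s:
  assumes "f \<in> U_p1" "f p1 = (a, 0, 0)"
  shows "snd (snd (f x)) * cnj a = snd (snd x)"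
proof -
  have "gmet (f x) (f p1) = gmet x p1" using assms(1) unfolding U_p1_def by blast
  then show ?thesis using assms(2) unfolding gmet_def p1_def by simp
qed

lemma wl_cline:
  assumes "snd (snd v) \<noteq> 0"
  shows "wl (cline v) = inverse (snd (snd v)) *s fst (snd v)"
  unfolding wl_def
proof (rule the_equality)
  show "\<exists>t. (t, inverse (snd (snd v)) *s fst (snd v), 1) \<in> cline v"
  proof -
    have "(inverse (snd (snd v)) * fst v, inverse (snd (snd v)) *s fst (snd v), 1) = csmul (inverse (snd (snd v))) v"
      using assms by (simp add: csmul_def)
    then show ?thesis unfolding cline_def by blast
  qed
next
  fix w assume "\<exists>t. (t, w, 1) \<in> cline v"
  then obtain t c where "(t, w, 1) = csmul c v" unfolding cline_def by auto
  then have "c * snd (snd v) = 1" "w = c *s fst (snd v)" by (auto simp: csmul_def)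
  then show "w = inverse (snd (snd v)) *s fst (snd v)" using assms
    by (simp add: field_simps)
qed

lemma image_cline: "clinear_map f \<Longrightarrow> f ` cline v = cline (f v)"
  unfolding cline_def by (auto simp: clin_smul image_iff)

lemma csmul_one: "csmul 1 x = x"
  by (simp add: csmul_def)

lemma phi_eq:
  fixes f :: "'n::finite amb \<Rightarrow> 'n amb"
  assumes fU: "f \<in> U_p1"
  shows "snd (snd (f (iv w))) \<noteq> 0 \<and>
         phi f w = inverse (snd (snd (f (iv w)))) *s fst (snd (f (iv w)))"
proof -
  obtain a where a: "a \<noteq> 0" "f p1 = (a, 0, 0)" using Up1_p1[OF fU] by blast
  have cl: "clinear_map f" using fU unfolding U_p1_def by blast
  define y where "y = f (iv w)"
  have "snd (snd y) * cnj a = 1" unfolding y_def using Up1_s[OF fU a(2), of "iv w"] by (simp add: iv_def)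
  then have sy: "snd (snd y) \<noteq> 0" by auto
  define E where "E = inverse (snd (snd y)) *s fst (snd y)"
  have all: "\<forall>l. iso_line l \<and> l \<noteq> cline p1 \<and> wl l = w \<longrightarrow> wl (f ` l) = E"
  proof (intro allI impI)
    fix l :: "'n amb set"
    assume H: "iso_line l \<and> l \<noteq> cline p1 \<and> wl l = w"
    then obtain v where v: "v \<noteq> 0" "gmet v v = 0" "l = cline v" unfolding iso_line_def by blast
    have sv: "snd (snd v) \<noteq> 0"
    proof
      assume s0: "snd (snd v) = 0"
      then have "(\<Sum>i\<in>UNIV. fst (snd v) $ i * cnj (fst (snd v) $ i)) = 0"
        using v(2) unfolding gmet_def by simp
      then have w0: "fst (snd v) = 0" by (rule normsum_zero)
      then have tne: "fst v \<noteq> 0" using v(1) s0 by (auto simp: prod_eq_iff)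
      have 1: "\<And>c. csmul c v = csmul (c * fst v) p1" using w0 s0
        by (simp add: csmul_def p1_def prod_eq_iff)
      have 2: "\<And>c. csmul c p1 = csmul (c / fst v) v" using w0 s0 tne
        by (simp add: csmul_def p1_def prod_eq_iff)
      have "cline v = cline p1"
      proof (intro equalityI subsetI)
        fix x :: "'n amb" assume "x \<in> cline v"
        then obtain c where "x = csmul c v" unfolding cline_def by blast
        then show "x \<in> cline p1" unfolding cline_def using 1 by auto
      next
        fix x :: "'n amb" assume "x \<in> cline p1"
        then obtain c where "x = csmul c p1" unfolding cline_def by blast
        then show "x \<in> cline v" unfolding cline_def using 2 by auto
      qed
      then show False using H v(3) by simp
    qed
    have wv: "inverse (snd (snd v)) *s fst (snd v) = w" using H v(3) wl_cline[OF sv] by simp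
    define k where "k = fst v / snd (snd v) - fst (iv w)"
    have vdec: "v = csmul (snd (snd v)) (iv w + csmul k p1)"
      using sv wv
      by (simp add: csmul_def p1_def prod_eq_iff k_def vec_eq_iff field_simps)
    have fv: "f v = csmul (snd (snd v)) (y + csmul k (a, 0, 0))"
      by (subst vdec) (simp add: clin_add[OF cl] clin_smul[OF cl] a(2) y_def)
    have fvs: "snd (snd (f v)) = snd (snd v) * snd (snd y)"
      "fst (snd (f v)) = snd (snd v) *s fst (snd y)"
      unfolding fv by (simp_all add: csmul_def)
    have "f ` l = cline (f v)" using v(3) image_cline[OF cl] by simp
    then have "wl (f ` l) = inverse (snd (snd v) * snd (snd y)) *s (snd (snd v) *s fst (snd y))"
      using wl_cline[of "f v"] fvs sv sy by simp
    also have "\<dots> = E" unfolding E_def using sv sy by (simp add: vec_eq_iff field_simps)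
    finally show "wl (f ` l) = E" .
  qed
  have ex: "iso_line (cline (iv w)) \<and> cline (iv w) \<noteq> cline p1 \<and> wl (cline (iv w)) = w"
  proof (intro conjI)
    show "iso_line (cline (iv w))" unfolding iso_line_def
      by (rule exI[where x="iv w"]) (simp add: iv_iso prod_eq_iff)
    have "iv w \<in> cline (iv w)" unfolding cline_def by (metis csmul_one rangeI)
    moreover have "iv w \<notin> cline p1" unfolding cline_def by (auto simp: csmul_def iv_def p1_def)
    ultimately show "cline (iv w) \<noteq> cline p1" by blast
    show "wl (cline (iv w)) = w" by (subst wl_cline) (simp_all add: iv_def)
  qed
  have "phi f w = E" unfolding phi_def
    by (rule the_equality) (use all ex in blast)+
  then show ?thesis using sy unfolding E_def y_def by simp
qed

lemma scaleR_comp: "((r::real) *\<^sub>R (v::complex^'n::finite))$i = of_real r * v$i"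
  by (simp only: vector_scaleR_component) (simp add: scaleR_conv_of_real)

lemma smul_decomp:
  fixes u :: "complex ^ 'n::finite"
  shows "c *s u = Re c *\<^sub>R u + Im c *\<^sub>R (\<i> *s u)"
proof -
  have "\<And>z::complex. c * z = of_real (Re c) * z + of_real (Im c) * (\<i> * z)"
  proof -
    fix z :: complex
    have "c = of_real (Re c) + \<i> * of_real (Im c)" by (rule complex_eq)
    then have "c * z = (of_real (Re c) + \<i> * of_real (Im c)) * z" by simp
    then show "c * z = of_real (Re c) * z + of_real (Im c) * (\<i> * z)" by (simp add: algebra_simps)
  qed
  then show ?thesis by (simp add: vec_eq_iff) (simp add: scaleR_conv_of_real)
qed

lemma lemA:
  fixes G :: "('n::finite amb \<Rightarrow> 'n amb) set"
  assumes sg: "is_subgroup_U G" and wi: "weakly_irreducible G"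
    and ca: "complex_affine L" and nU: "L \<noteq> UNIV" and inv: "\<forall>f\<in>G. phi f ` L \<subseteq> L"
  shows False
proof -
  have aff: "affine L" and ne: "L \<noteq> {}" and icond: "\<forall>x\<in>L. \<forall>y\<in>L. x + \<i> *s (y - x) \<in> L"
    using ca unfolding complex_affine_def by auto
  obtain w0 where w0: "w0 \<in> L" using ne by blast
  define W where "W = {u. w0 + u \<in> L}"
  have WS: "W = (\<lambda>x. x - w0) ` L"
  proof (intro equalityI subsetI)
    fix u assume "u \<in> W"
    then have "w0 + u \<in> L" "u = (w0 + u) - w0" unfolding W_def by simp_all
    then show "u \<in> (\<lambda>x. x - w0) ` L" by (metis imageI)
  next
    fix u assume "u \<in> (\<lambda>x. x - w0) ` L"
    then obtain x where "x \<in> L" "u = x - w0" by blast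
    then show "u \<in> W" unfolding W_def by simp
  qed
  have sub: "subspace W" unfolding WS by (rule affine_diffs_subspace_subtract[OF aff w0])
  have W0: "0 \<in> W" using sub by (rule subspace_0)
  have Wadd: "\<And>u v. u \<in> W \<Longrightarrow> v \<in> W \<Longrightarrow> u + v \<in> W" using sub by (rule subspace_add)
  have Wi: "\<And>u. u \<in> W \<Longrightarrow> \<i> *s u \<in> W"
  proof -
    fix u assume "u \<in> W"
    then have "w0 + u \<in> L" unfolding W_def by simp
    then have "w0 + \<i> *s ((w0 + u) - w0) \<in> L" using icond w0 by blast
    then show "\<i> *s u \<in> W" unfolding W_def by simp
  qed
  have Wsmul: "\<And>c u. u \<in> W \<Longrightarrow> c *s u \<in> W"
  proof -
    fix c u assume u: "u \<in> W"
    have "Re c *\<^sub>R u + Im c *\<^sub>R (\<i> *s u) \<in> W"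
      by (rule subspace_add[OF sub subspace_scale[OF sub u] subspace_scale[OF sub Wi[OF u]]])
    then show "c *s u \<in> W" by (subst smul_decomp)
  qed
  define U where "U = {x :: 'n amb. fst (snd x) - snd (snd x) *s w0 \<in> W}"
  have U0: "0 \<in> U" unfolding U_def using W0 by simp
  have Uadd: "\<And>x y. x \<in> U \<Longrightarrow> y \<in> U \<Longrightarrow> x + y \<in> U"
  proof -
    fix x y assume hx: "x \<in> U" and hy: "y \<in> U"
    have hx': "fst (snd x) - snd (snd x) *s w0 \<in> W" using hx unfolding U_def by simp
    have hy': "fst (snd y) - snd (snd y) *s w0 \<in> W" using hy unfolding U_def by simp
    have "(fst (snd x) - snd (snd x) *s w0) + (fst (snd y) - snd (snd y) *s w0) \<in> W"
      by (rule Wadd[OF hx' hy'])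
    moreover have "(fst (snd x) - snd (snd x) *s w0) + (fst (snd y) - snd (snd y) *s w0)
       = fst (snd (x + y)) - snd (snd (x + y)) *s w0" by (simp add: vec_eq_iff algebra_simps)
    ultimately show "x + y \<in> U" unfolding U_def by simp
  qed
  have Usmul: "\<And>c x. x \<in> U \<Longrightarrow> csmul c x \<in> U"
  proof -
    fix c x assume hx: "x \<in> U"
    have hx': "fst (snd x) - snd (snd x) *s w0 \<in> W" using hx unfolding U_def by simp
    have "c *s (fst (snd x) - snd (snd x) *s w0) \<in> W" by (rule Wsmul[OF hx'])
    moreover have "c *s (fst (snd x) - snd (snd x) *s w0)
       = fst (snd (csmul c x)) - snd (snd (csmul c x)) *s w0" by (simp add: vec_eq_iff algebra_simps csmul_def)
    ultimately show "csmul c x \<in> U" unfolding U_def by simp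
  qed
  have csU: "csubspace_amb U" unfolding csubspace_amb_def using U0 Uadd Usmul by blast
  have p1U: "p1 \<in> U" unfolding U_def p1_def using W0 by simp
  have GU: "\<And>f. f \<in> G \<Longrightarrow> f \<in> U_p1" using sg unfolding is_subgroup_U_def by blast
  have fivU: "\<And>f w. f \<in> G \<Longrightarrow> w \<in> L \<Longrightarrow> f (iv w) \<in> U"
  proof -
    fix f w assume f: "f \<in> G" and w: "w \<in> L"
    define y where "y = f (iv w)"
    have ph: "snd (snd y) \<noteq> 0" "phi f w = inverse (snd (snd y)) *s fst (snd y)"
      using phi_eq[OF GU[OF f], of w] unfolding y_def by auto
    have "phi f w \<in> L" using inv f w by blast
    then have "inverse (snd (snd y)) *s fst (snd y) - w0 \<in> W" unfolding W_def ph(2) by simp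
    then have "snd (snd y) *s (inverse (snd (snd y)) *s fst (snd y) - w0) \<in> W" by (rule Wsmul)
    moreover have "snd (snd y) *s (inverse (snd (snd y)) *s fst (snd y) - w0) = fst (snd y) - snd (snd y) *s w0"
      using ph(1) by (simp add: vec_eq_iff field_simps)
    ultimately show "f (iv w) \<in> U" unfolding U_def y_def by simp
  qed
  have fU: "\<And>f x. f \<in> G \<Longrightarrow> x \<in> U \<Longrightarrow> f x \<in> U"
  proof -
    fix f x assume f: "f \<in> G" and x: "x \<in> U"
    have cl: "clinear_map f" using GU[OF f] unfolding U_p1_def by blast
    obtain a where a: "a \<noteq> 0" "f p1 = (a, 0, 0)" using Up1_p1[OF GU[OF f]] by blast
    define u where "u = fst (snd x) - snd (snd x) *s w0"
    have "u \<in> W" using x unfolding U_def u_def by simp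
    then have wu: "w0 + u \<in> L" unfolding W_def by simp
    define z where "z = csmul (snd (snd x)) (iv w0) + iv (w0 + u) + csmul (-1) (iv w0)"
    define tau where "tau = fst x - fst z"
    have xd: "x = z + csmul tau p1"
      by (simp add: prod_eq_iff csmul_def p1_def vec_eq_iff u_def tau_def z_def algebra_simps)
    have eq: "f x = csmul (snd (snd x)) (f (iv w0)) + f (iv (w0 + u)) + csmul (-1) (f (iv w0)) + csmul tau (f p1)"
      by (subst xd) (simp add: z_def clin_add[OF cl] clin_smul[OF cl])
    have fp1U: "f p1 \<in> U" unfolding a(2) U_def using W0 by simp
    show "f x \<in> U" unfolding eq by (intro Uadd Usmul fivU[OF f w0] fivU[OF f wu] fp1U)
  qed
  have Ueq: "\<forall>f\<in>G. f ` U = U"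
  proof
    fix f assume f: "f \<in> G"
    show "f ` U = U"
    proof (intro equalityI subsetI)
      fix x assume "x \<in> f ` U" then show "x \<in> U" using fU[OF f] by blast
    next
      fix x assume x: "x \<in> U"
      have "inv f \<in> G" using sg f unfolding is_subgroup_U_def by blast
      then have "inv f x \<in> U" using fU x by blast
      moreover have "bij f" using GU[OF f] unfolding U_p1_def by blast
      then have "f (inv f x) = x" by (metis bij_def surj_f_inv_f)
      ultimately show "x \<in> f ` U" by (metis imageI)
    qed
  qed
  have nd: "nondeg_on U" unfolding nondeg_on_def
  proof (intro ballI impI)
    fix x assume x: "x \<in> U" and orth: "\<forall>y\<in>U. gmet x y = 0"
    have "gmet x p1 = 0" using orth p1U by blast
    then have s0: "snd (snd x) = 0" unfolding gmet_def p1_def by simp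
    then have wW: "fst (snd x) \<in> W" using x unfolding U_def by simp
    have "(0, fst (snd x), 0) \<in> U" unfolding U_def using wW by simp
    then have "gmet x (0, fst (snd x), 0) = 0" using orth by blast
    then have "(\<Sum>i\<in>UNIV. fst (snd x) $ i * cnj (fst (snd x) $ i)) = 0"
      using s0 unfolding gmet_def by simp
    then have w0x: "fst (snd x) = 0" by (rule normsum_zero)
    have "(0, w0, 1) \<in> U" unfolding U_def using W0 by simp
    then have "gmet x (0, w0, 1) = 0" using orth by blast
    then have "fst x = 0" using s0 w0x unfolding gmet_def by simp
    then show "x = 0" using s0 w0x by (simp add: prod_eq_iff)
  qed
  have n0: "U \<noteq> {0}" using p1U by (auto simp: p1_def prod_eq_iff)
  obtain zz where zz: "zz \<notin> L" using nU by blast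
  have "(0, zz, 1) \<notin> U"
  proof
    assume "(0, zz, 1) \<in> U"
    then have "w0 + (zz - w0) \<in> L" unfolding U_def W_def by simp
    then show False using zz by simp
  qed
  then have nU2: "U \<noteq> UNIV" by blast
  have "csubspace_amb U \<and> U \<noteq> {0} \<and> U \<noteq> UNIV \<and> nondeg_on U \<and> (\<forall>f\<in>G. f ` U = U)"
    using csU n0 nU2 nd Ueq by (intro conjI)
  then show False using wi unfolding weakly_irreducible_def by blast
qed

lemma sR: "(r::real) *\<^sub>R (v::complex^'n::finite) = complex_of_real r *s v"
  by (simp add: vec_eq_iff) (simp add: scaleR_conv_of_real)

lemma phi_aff:
  fixes f :: "'n::finite amb \<Rightarrow> 'n amb"
  assumes fU: "f \<in> U_p1"
  shows "\<exists>B d. (\<forall>x y. B (x + y) = B x + B y) \<and> (\<forall>c x. B (c *s x) = c *s B x) \<and> (\<forall>w. phi f w = B w + d)"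
proof -
  obtain a where a: "a \<noteq> 0" "f p1 = (a, 0, 0)" using Up1_p1[OF fU] by blast
  have cl: "clinear_map f" using fU unfolding U_p1_def by blast
  define B where "B = (\<lambda>x. cnj a *s fst (snd (f (0, x, 0))))"
  define d where "d = cnj a *s fst (snd (f (0, 0, 1)))"
  have Badd: "\<forall>x y. B (x + y) = B x + B y"
  proof (intro allI)
    fix x y :: "complex^'n"
    have "(0, x + y, 0) = (0, x, 0) + ((0, y, 0) :: 'n amb)" by simp
    then have "f (0, x + y, 0) = f (0, x, 0) + f (0, y, 0)" using clin_add[OF cl] by metis
    then show "B (x + y) = B x + B y" unfolding B_def by (simp add: vec_eq_iff algebra_simps)
  qed
  have Bsm: "\<forall>c x. B (c *s x) = c *s B x"
  proof (intro allI)
    fix c and x :: "complex^'n"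
    have "(0, c *s x, 0) = csmul c ((0, x, 0) :: 'n amb)" by (simp add: csmul_def)
    then have "f (0, c *s x, 0) = csmul c (f (0, x, 0))" using clin_smul[OF cl] by metis
    then show "B (c *s x) = c *s B x" unfolding B_def by (simp add: vec_eq_iff algebra_simps csmul_def)
  qed
  have ph: "\<forall>w. phi f w = B w + d"
  proof
    fix w :: "complex^'n"
    have "iv w = (0, w, 0) + (0, 0, 1) + csmul (fst (iv w)) p1"
      by (simp add: prod_eq_iff csmul_def p1_def)
    then have fy: "f (iv w) = f (0, w, 0) + f (0, 0, 1) + csmul (fst (iv w)) (a, 0, 0)"
      using clin_add[OF cl] clin_smul[OF cl] a(2) by metis
    have "snd (snd (f (iv w))) * cnj a = 1" using Up1_s[OF fU a(2), of "iv w"] by simp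
    then have inv: "inverse (snd (snd (f (iv w)))) = cnj a" by (rule inverse_unique)
    have "phi f w = cnj a *s fst (snd (f (iv w)))" using phi_eq[OF fU, of w] inv by simp
    also have "\<dots> = B w + d" unfolding fy B_def d_def by (simp add: vec_eq_iff algebra_simps csmul_def)
    finally show "phi f w = B w + d" .
  qed
  show ?thesis using Badd Bsm ph by blast
qed

lemma preim:
  fixes B :: "complex^'n::finite \<Rightarrow> complex^'n"
  assumes Badd: "\<forall>x y. B (x + y) = B x + B y" and Bsm: "\<forall>c x. B (c *s x) = c *s B x"
    and M: "complex_affine M" and ne: "P \<noteq> {}" and PM: "\<forall>x\<in>P. B x + d \<in> M"
  shows "complex_affine {x. B x + d \<in> M}"
proof -
  have affM: "affine M" and icond: "\<forall>x\<in>M. \<forall>y\<in>M. x + \<i> *s (y - x) \<in> M"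
    using M unfolding complex_affine_def by auto
  have Bsub: "\<And>x y. B (y - x) = B y - B x"
  proof -
    fix x y
    have "B (y - x) + B x = B y" using Badd by (metis diff_add_cancel)
    then show "B (y - x) = B y - B x" by (metis add_diff_cancel)
  qed
  have "affine {x. B x + d \<in> M}" unfolding affine_def
  proof (intro ballI allI impI)
    fix x y u v assume x: "x \<in> {x. B x + d \<in> M}" and y: "y \<in> {x. B x + d \<in> M}" and uv: "u + v = (1::real)"
    have "u *\<^sub>R (B x + d) + v *\<^sub>R (B y + d) \<in> M" using affM x y uv unfolding affine_def by blast
    moreover have "B (u *\<^sub>R x + v *\<^sub>R y) + d = u *\<^sub>R (B x + d) + v *\<^sub>R (B y + d)"
    proof -
      have uv': "complex_of_real u + complex_of_real v = 1" using uv by (metis of_real_1 of_real_add)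
      have e2: "B (of_real u *s x + of_real v *s y) = of_real u *s B x + of_real v *s B y"
        by (simp only: Badd[rule_format] Bsm[rule_format])
      have dv: "of_real u *s d + of_real v *s d = d"
        using uv' by (simp add: vec_eq_iff) (metis distrib_right mult_1)
      have r: "of_real u *s (B x + d) + of_real v *s (B y + d)
           = of_real u *s B x + of_real v *s B y + (of_real u *s d + of_real v *s d)"
        by (simp add: vec_eq_iff algebra_simps)
      show ?thesis unfolding sR e2 r dv ..
    qed
    ultimately show "u *\<^sub>R x + v *\<^sub>R y \<in> {x. B x + d \<in> M}" by simp
  qed
  moreover have "{x. B x + d \<in> M} \<noteq> {}" using ne PM by blast
  moreover have "\<forall>x\<in>{x. B x + d \<in> M}. \<forall>y\<in>{x. B x + d \<in> M}. x + \<i> *s (y - x) \<in> {x. B x + d \<in> M}"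
  proof (intro ballI)
    fix x y assume x: "x \<in> {x. B x + d \<in> M}" and y: "y \<in> {x. B x + d \<in> M}"
    have "(B x + d) + \<i> *s ((B y + d) - (B x + d)) \<in> M" using icond x y by blast
    moreover have "B (x + \<i> *s (y - x)) + d = (B x + d) + \<i> *s ((B y + d) - (B x + d))"
    proof -
      have e1: "B (x + \<i> *s (y - x)) = B x + \<i> *s (B y - B x)"
        by (simp only: Badd[rule_format] Bsm[rule_format] Bsub)
      show ?thesis unfolding e1 by (simp add: vec_eq_iff algebra_simps)
    qed
    ultimately show "x + \<i> *s (y - x) \<in> {x. B x + d \<in> M}" by (metis (no_types, lifting) mem_Collect_eq)
  qed
  ultimately show ?thesis unfolding complex_affine_def by blast
qed

theorem theorem2p5p1:
  fixes G :: "('n::finite amb \<Rightarrow> 'n amb) set"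
  assumes "is_subgroup_U G"
    and "weakly_irreducible G"
  shows "(\<not> (\<exists>L. complex_affine L \<and> L \<noteq> UNIV \<and> (\<forall>f\<in>G. phi f ` L = L)))
       \<and> (\<forall>L. affine L \<and> L \<noteq> {} \<and> L \<noteq> UNIV \<and> \<not> complex_affine L
              \<and> (\<forall>f\<in>G. phi f ` L = L) \<longrightarrow> complex_affine_hull L = UNIV)"
proof (intro conjI allI impI notI)
  assume "\<exists>L. complex_affine L \<and> L \<noteq> UNIV \<and> (\<forall>f\<in>G. phi f ` L = L)"
  then obtain L where "complex_affine L" "L \<noteq> UNIV" "\<forall>f\<in>G. phi f ` L \<subseteq> L" by blast
  then show False using lemA[OF assms] by blast
next
  fix L :: "(complex^'n) set"
  assume H: "affine L \<and> L \<noteq> {} \<and> L \<noteq> UNIV \<and> \<not> complex_affine L \<and> (\<forall>f\<in>G. phi f ` L = L)"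
  define M where "M = complex_affine_hull L"
  define Fam where "Fam = {N. complex_affine N \<and> L \<subseteq> N}"
  have Mdef: "M = \<Inter> Fam" unfolding M_def Fam_def complex_affine_hull_def by simp
  have LM: "L \<subseteq> M" unfolding Mdef Fam_def by blast
  have cM: "complex_affine M" unfolding complex_affine_def
  proof (intro conjI ballI)
    show "affine M" unfolding Mdef Fam_def by (rule affine_Inter) (auto simp: complex_affine_def)
    show "M \<noteq> {}" using LM H by blast
  next
    fix x y assume x: "x \<in> M" and y: "y \<in> M"
    show "x + \<i> *s (y - x) \<in> M" unfolding Mdef
    proof
      fix N assume N: "N \<in> Fam"
      then have "x \<in> N" "y \<in> N" using x y unfolding Mdef by blast+
      then show "x + \<i> *s (y - x) \<in> N" using N unfolding Fam_def complex_affine_def by blast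
    qed
  qed
  have GU: "\<And>f. f \<in> G \<Longrightarrow> f \<in> U_p1" using assms(1) unfolding is_subgroup_U_def by blast
  have inv: "\<forall>f\<in>G. phi f ` M \<subseteq> M"
  proof (intro ballI subsetI)
    fix f z assume f: "f \<in> G" and z: "z \<in> phi f ` M"
    then obtain x where x: "x \<in> M" "z = phi f x" by blast
    obtain B d where Bd: "\<forall>x y. B (x + y) = B x + B y" "\<forall>c x. B (c *s x) = c *s B x" "\<forall>w. phi f w = B w + d"
      using phi_aff[OF GU[OF f]] by blast
    show "z \<in> M" unfolding Mdef
    proof
      fix N assume N: "N \<in> Fam"
      have "\<forall>w\<in>L. B w + d \<in> N"
      proof
        fix w assume "w \<in> L"
        then have "phi f w \<in> L" using H f by blast
        then show "B w + d \<in> N" using N Bd(3) unfolding Fam_def by auto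
      qed
      then have "complex_affine {x. B x + d \<in> N}"
        using preim[OF Bd(1) Bd(2), of N L d] N H unfolding Fam_def by blast
      moreover have "L \<subseteq> {x. B x + d \<in> N}" using \<open>\<forall>w\<in>L. B w + d \<in> N\<close> by blast
      ultimately have "{x. B x + d \<in> N} \<in> Fam" unfolding Fam_def by blast
      then have "x \<in> {x. B x + d \<in> N}" using x(1) unfolding Mdef by blast
      then show "z \<in> N" using x(2) Bd(3) by simp
    qed
  qed
  show "complex_affine_hull L = UNIV"
  proof (rule ccontr)
    assume "complex_affine_hull L \<noteq> UNIV"
    then have "M \<noteq> UNIV" unfolding M_def .
    then show False using lemA[OF assms cM] inv by blast
  qed
qed

end
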